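(* Let $R_1$ and $R_2$ be commutative rings with nonzero identity, let $I_1$ be a proper ideal of $R_1$ and $I_2$ a proper ideal of $R_2$, and put $R=R_1\times R_2$ and $I=I_1\times I_2$. Then the graph $\Gamma''_{I}(R)$ is connected and $\operatorname{diam}(\Gamma''_{I}(R))\leq 3$.
   Context: All rings are commutative with nonzero identity; $R_1\times R_2$ has componentwise operations and $I_1\times I_2$ is an ideal of it. For a ring $R$ and an ideal $I$ of $R$, $\Gamma''_I(R)$ is the simple undirected graph whose vertex set is $\{x\in R\setminus I : xR+I\neq R\}$, and two distinct vertices $x,y$ are adjacent if and only if $x\notin yR+I$ and $y\notin xR+I$. A graph is connected if any two distinct vertices are joined by a path; the diameter is the supremum of the distances (lengths of shortest paths) between vertices. *)

theory Defs
  imports "HOL-Algebra.Chinese_Remainder" "HOL-Library.Extended_Nat"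
begin

definition elt_ideal_sum :: "('a, 'm) ring_scheme \<Rightarrow> 'a set \<Rightarrow> 'a \<Rightarrow> 'a set" where
  "elt_ideal_sum R I x = {x \<otimes>\<^bsub>R\<^esub> r \<oplus>\<^bsub>R\<^esub> i | r i. r \<in> carrier R \<and> i \<in> I}"

definition gverts :: "('a, 'm) ring_scheme \<Rightarrow> 'a set \<Rightarrow> 'a set" where
  "gverts R I = {x \<in> carrier R - I. elt_ideal_sum R I x \<noteq> carrier R}"

definition gadj :: "('a, 'm) ring_scheme \<Rightarrow> 'a set \<Rightarrow> 'a \<Rightarrow> 'a \<Rightarrow> bool" where
  "gadj R I x y \<longleftrightarrow> x \<in> gverts R I \<and> y \<in> gverts R I \<and> x \<noteq> y \<and>
     x \<notin> elt_ideal_sum R I y \<and> y \<notin> elt_ideal_sum R I x"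

definition is_walk :: "'a set \<Rightarrow> ('a \<Rightarrow> 'a \<Rightarrow> bool) \<Rightarrow> 'a \<Rightarrow> 'a \<Rightarrow> 'a list \<Rightarrow> bool" where
  "is_walk V E u v p \<longleftrightarrow> p \<noteq> [] \<and> hd p = u \<and> last p = v \<and> set p \<subseteq> V \<and> successively E p"

definition graph_connected :: "'a set \<Rightarrow> ('a \<Rightarrow> 'a \<Rightarrow> bool) \<Rightarrow> bool" where
  "graph_connected V E \<longleftrightarrow> (\<forall>u\<in>V. \<forall>v\<in>V. u \<noteq> v \<longrightarrow> (\<exists>p. is_walk V E u v p))"

text \<open>Distance (infinity if no path) and diameter (supremum of distances).\<close>
definition graph_dist :: "'a set \<Rightarrow> ('a \<Rightarrow> 'a \<Rightarrow> bool) \<Rightarrow> 'a \<Rightarrow> 'a \<Rightarrow> enat" where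
  "graph_dist V E u v = (INF p \<in> {p. is_walk V E u v p}. enat (length p - 1))"

definition graph_diam :: "'a set \<Rightarrow> ('a \<Rightarrow> 'a \<Rightarrow> bool) \<Rightarrow> enat" where
  "graph_diam V E = (SUP (u, v) \<in> V \<times> V. graph_dist V E u v)"

end

theory Submission
  imports Defs
begin

lemma RDirProd_mult: "mult (RDirProd R S) (a,b) (c,d) = (a \<otimes>\<^bsub>R\<^esub> c, b \<otimes>\<^bsub>S\<^esub> d)"
  by (simp add: RDirProd_def DirProd_def monoid.defs)
lemma RDirProd_add: "add (RDirProd R S) (a,b) (c,d) = (a \<oplus>\<^bsub>R\<^esub> c, b \<oplus>\<^bsub>S\<^esub> d)"
  by (simp add: RDirProd_def DirProd_def monoid.defs)

lemma elt_prod: "elt_ideal_sum (RDirProd R S) (I \<times> J) (a,b) = elt_ideal_sum R I a \<times> elt_ideal_sum S J b"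
  unfolding elt_ideal_sum_def RDirProd_carrier
  by (auto simp: RDirProd_mult RDirProd_add)

lemma elt_sub: assumes "cring R" "ideal I R" "a \<in> carrier R"
  shows "elt_ideal_sum R I a \<subseteq> carrier R"
proof -
  interpret cring R by fact
  interpret ideal I R by fact
  show ?thesis unfolding elt_ideal_sum_def using assms(3) by auto
qed

lemma elt_one: assumes "cring R" "ideal I R" "a \<in> carrier R" "\<one>\<^bsub>R\<^esub> \<in> elt_ideal_sum R I a"
  shows "elt_ideal_sum R I a = carrier R"
proof -
  interpret cring R by fact
  interpret ideal I R by fact
  obtain r i where ri: "r \<in> carrier R" "i \<in> I" "\<one>\<^bsub>R\<^esub> = a \<otimes>\<^bsub>R\<^esub> r \<oplus>\<^bsub>R\<^esub> i"
    using assms(4) unfolding elt_ideal_sum_def by auto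
  have "c \<in> elt_ideal_sum R I a" if c: "c \<in> carrier R" for c
  proof -
    have iR: "i \<in> carrier R" using ri(2) by auto
    have "c = (a \<otimes>\<^bsub>R\<^esub> r \<oplus>\<^bsub>R\<^esub> i) \<otimes>\<^bsub>R\<^esub> c" using ri c by (metis l_one)
    also have "\<dots> = a \<otimes>\<^bsub>R\<^esub> (r \<otimes>\<^bsub>R\<^esub> c) \<oplus>\<^bsub>R\<^esub> i \<otimes>\<^bsub>R\<^esub> c" using ri iR c assms(3)
      by (simp add: l_distr m_assoc)
    finally show ?thesis unfolding elt_ideal_sum_def using ri c I_r_closed[OF ri(2) c] by blast
  qed
  then show ?thesis using elt_sub[OF assms(1-3)] by blast
qed

lemma elt_in_I: assumes "cring R" "ideal I R" "a \<in> I"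
  shows "elt_ideal_sum R I a \<subseteq> I"
proof -
  interpret cring R by fact
  interpret ideal I R by fact
  show ?thesis unfolding elt_ideal_sum_def using assms(3) I_r_closed by auto
qed

lemma one_notin: assumes "cring R" "ideal I R" "I \<noteq> carrier R" shows "\<one>\<^bsub>R\<^esub> \<notin> I"
proof -
  interpret ideal I R by fact
  show ?thesis using assms(3) one_imp_carrier by auto
qed

lemma walk_join: "is_walk V E u w p \<Longrightarrow> is_walk V E w v q \<Longrightarrow> is_walk V E u v (p @ tl q)"
  unfolding is_walk_def
  by (cases q; cases "tl q") (auto simp: successively_append_iff)

lemma walk_edge: "E u v \<Longrightarrow> u \<in> V \<Longrightarrow> v \<in> V \<Longrightarrow> is_walk V E u v [u, v]"
  unfolding is_walk_def by auto

lemma walk_triv: "u \<in> V \<Longrightarrow> is_walk V E u u [u]"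
  unfolding is_walk_def by auto

lemma abstract_graph:
  assumes mem: "\<And>x y. E x y \<Longrightarrow> x \<in> V \<and> y \<in> V"
    and sym: "\<And>x y. E x y \<Longrightarrow> E y x"
    and h12: "E h1 h2"
    and hub: "\<And>x. x \<in> V \<Longrightarrow> E x h1 \<or> E x h2"
  shows "graph_connected V E \<and> graph_diam V E \<le> 3"
proof -
  have near: "\<exists>p q. is_walk V E x h p \<and> length p \<le> 2 \<and> is_walk V E h x q \<and> length q \<le> 2"
    if "E x h" for x h
    using walk_edge[of E x h V] walk_edge[of E h x V] sym[OF that] that mem[OF that] by fastforce
  have main: "\<exists>p. is_walk V E u v p \<and> length p \<le> 4" if u: "u \<in> V" and v: "v \<in> V" for u v
  proof -
    have hV: "h1 \<in> V" "h2 \<in> V" using mem[OF h12] by auto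
    have e12: "is_walk V E h1 h2 [h1,h2]" "is_walk V E h2 h1 [h2,h1]"
      using walk_edge[of E h1 h2 V] walk_edge[of E h2 h1 V] h12 sym[OF h12] hV by auto
    obtain hu hv where hu: "E u hu" "hu \<in> {h1,h2}" and hv: "E v hv" "hv \<in> {h1,h2}"
      using hub[OF u] hub[OF v] by blast
    obtain p1 where p1: "is_walk V E u hu p1" "length p1 \<le> 2" using near[OF hu(1)] by blast
    obtain q1 where q1: "is_walk V E hv v q1" "length q1 \<le> 2" using near[OF hv(1)] by blast
    show ?thesis
    proof (cases "hu = hv")
      case True
      then show ?thesis using walk_join[OF p1(1)] q1 p1(2)
        by (intro exI[of _ "p1 @ tl q1"]) auto
    next
      case False
      then have "is_walk V E hu hv [hu,hv]" using e12 hu hv by auto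
      from walk_join[OF walk_join[OF p1(1) this] q1(1)] show ?thesis using p1(2) q1(2)
        by (intro exI[of _ "(p1 @ tl [hu,hv]) @ tl q1"]) auto
    qed
  qed
  have conn: "graph_connected V E" unfolding graph_connected_def using main by blast
  have "graph_dist V E u v \<le> 3" if uv: "u \<in> V" "v \<in> V" for u v
  proof -
    obtain p where p: "is_walk V E u v p" "length p \<le> 4" using main[OF uv] by blast
    have "graph_dist V E u v \<le> enat (length p - 1)"
      unfolding graph_dist_def using p(1) by (intro INF_lower) auto
    also have "\<dots> \<le> 3" using p(2) by (simp add: numeral_eq_enat)
    finally show ?thesis .
  qed
  then have "graph_diam V E \<le> 3" unfolding graph_diam_def by (intro SUP_least) auto
  with conn show ?thesis by blast
qed


theorem theorem2p9:
  fixes R1 :: "('a, 'm) ring_scheme" and R2 :: "('b, 'n) ring_scheme"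
    and I1 :: "'a set" and I2 :: "'b set"
  assumes "cring R1" and "\<one>\<^bsub>R1\<^esub> \<noteq> \<zero>\<^bsub>R1\<^esub>"
    and "cring R2" and "\<one>\<^bsub>R2\<^esub> \<noteq> \<zero>\<^bsub>R2\<^esub>"
    and "ideal I1 R1" and "I1 \<noteq> carrier R1"
    and "ideal I2 R2" and "I2 \<noteq> carrier R2"
  shows "graph_connected (gverts (RDirProd R1 R2) (I1 \<times> I2)) (gadj (RDirProd R1 R2) (I1 \<times> I2))
    \<and> graph_diam (gverts (RDirProd R1 R2) (I1 \<times> I2)) (gadj (RDirProd R1 R2) (I1 \<times> I2)) \<le> 3"
proof -
  let ?P = "RDirProd R1 R2" and ?I = "I1 \<times> I2"
  let ?V = "gverts ?P ?I" and ?E = "gadj ?P ?I"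
  note c1 = assms(1) and c2 = assms(3) and i1 = assms(5) and i2 = assms(7)
  have I1c: "I1 \<subseteq> carrier R1" using i1 by (simp add: ideal_def additive_subgroup.a_subset)
  have I2c: "I2 \<subseteq> carrier R2" using i2 by (simp add: ideal_def additive_subgroup.a_subset)
  have o1: "\<one>\<^bsub>R1\<^esub> \<notin> I1" by (rule one_notin[OF c1 i1 assms(6)])
  have o2: "\<one>\<^bsub>R2\<^esub> \<notin> I2" by (rule one_notin[OF c2 i2 assms(8)])
  have one1: "\<one>\<^bsub>R1\<^esub> \<in> carrier R1" using c1 by (simp add: cring_def ring_def monoid.one_closed)
  have one2: "\<one>\<^bsub>R2\<^esub> \<in> carrier R2" using c2 by (simp add: cring_def ring_def monoid.one_closed)
  have z1: "\<zero>\<^bsub>R1\<^esub> \<in> I1" using i1 by (simp add: additive_subgroup.zero_closed ideal_def)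
  have z2: "\<zero>\<^bsub>R2\<^esub> \<in> I2" using i2 by (simp add: additive_subgroup.zero_closed ideal_def)
  have nc1: "elt_ideal_sum R1 I1 a \<noteq> carrier R1" if "a \<in> I1" for a
  proof
    assume "elt_ideal_sum R1 I1 a = carrier R1"
    then have "carrier R1 \<subseteq> I1" using elt_in_I[OF c1 i1 that] by simp
    with I1c assms(6) show False by blast
  qed
  have nc2: "elt_ideal_sum R2 I2 a \<noteq> carrier R2" if "a \<in> I2" for a
  proof
    assume "elt_ideal_sum R2 I2 a = carrier R2"
    then have "carrier R2 \<subseteq> I2" using elt_in_I[OF c2 i2 that] by simp
    with I2c assms(8) show False by blast
  qed
  have vert: "(a,b) \<in> ?V \<longleftrightarrow> a \<in> carrier R1 \<and> b \<in> carrier R2 \<and> \<not> (a \<in> I1 \<and> b \<in> I2)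
      \<and> \<not> (elt_ideal_sum R1 I1 a = carrier R1 \<and> elt_ideal_sum R2 I2 b = carrier R2)" for a b
  proof -
    have "elt_ideal_sum R1 I1 a \<times> elt_ideal_sum R2 I2 b = carrier R1 \<times> carrier R2 \<longleftrightarrow>
        (elt_ideal_sum R1 I1 a = carrier R1 \<and> elt_ideal_sum R2 I2 b = carrier R2)"
      using one1 one2 by (auto simp: times_eq_iff)
    then show ?thesis unfolding gverts_def RDirProd_carrier by (simp add: elt_prod)
  qed
  define e1 where "e1 = (\<one>\<^bsub>R1\<^esub>, \<zero>\<^bsub>R2\<^esub>)"
  define e2 where "e2 = (\<zero>\<^bsub>R1\<^esub>, \<one>\<^bsub>R2\<^esub>)"
  have e1V: "e1 \<in> ?V" unfolding e1_def vert using o1 one1 z2 I2c nc2[OF z2] by auto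
  have e2V: "e2 \<in> ?V" unfolding e2_def vert using o2 one2 z1 I1c nc1[OF z1] by auto
  have adj1: "?E (a,b) e1" if v: "(a,b) \<in> ?V" and b: "b \<notin> I2" and a: "elt_ideal_sum R1 I1 a \<noteq> carrier R1" for a b
  proof -
    have ac: "a \<in> carrier R1" using v unfolding vert by blast
    have "(a,b) \<noteq> e1" using b z2 e1_def by auto
    moreover have "(a,b) \<notin> elt_ideal_sum ?P ?I e1"
      unfolding e1_def elt_prod using elt_in_I[OF c2 i2 z2] b by auto
    moreover have "e1 \<notin> elt_ideal_sum ?P ?I (a,b)"
      unfolding e1_def elt_prod using elt_one[OF c1 i1 ac] a by auto
    ultimately show ?thesis unfolding gadj_def using v e1V by blast
  qed
  have adj2: "?E (a,b) e2" if v: "(a,b) \<in> ?V" and a: "a \<notin> I1" and b: "elt_ideal_sum R2 I2 b \<noteq> carrier R2" for a b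
  proof -
    have bc: "b \<in> carrier R2" using v unfolding vert by blast
    have "(a,b) \<noteq> e2" using a z1 e2_def by auto
    moreover have "(a,b) \<notin> elt_ideal_sum ?P ?I e2"
      unfolding e2_def elt_prod using elt_in_I[OF c1 i1 z1] a by auto
    moreover have "e2 \<notin> elt_ideal_sum ?P ?I (a,b)"
      unfolding e2_def elt_prod using elt_one[OF c2 i2 bc] b by auto
    ultimately show ?thesis unfolding gadj_def using v e2V by blast
  qed
  show ?thesis
  proof (rule abstract_graph)
    show "\<And>x y. ?E x y \<Longrightarrow> x \<in> ?V \<and> y \<in> ?V" unfolding gadj_def by blast
    show "\<And>x y. ?E x y \<Longrightarrow> ?E y x" unfolding gadj_def by blast
    show "?E e1 e2" using adj2[of "\<one>\<^bsub>R1\<^esub>" "\<zero>\<^bsub>R2\<^esub>", OF _ o1 nc2[OF z2]] e1V unfolding e1_def by simp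
    fix x assume xV: "x \<in> ?V"
    obtain a b where x: "x = (a,b)" by fastforce
    have v: "(a,b) \<in> ?V" using xV x by simp
    show "?E x e1 \<or> ?E x e2"
    proof (cases "b \<notin> I2 \<and> elt_ideal_sum R1 I1 a \<noteq> carrier R1")
      case True then show ?thesis using adj1[OF v] x by blast
    next
      case F1: False
      show ?thesis
      proof (cases "a \<notin> I1 \<and> elt_ideal_sum R2 I2 b \<noteq> carrier R2")
        case True then show ?thesis using adj2[OF v] x by blast
      next
        case False
        have va: "\<not> (a \<in> I1 \<and> b \<in> I2)" "\<not> (elt_ideal_sum R1 I1 a = carrier R1 \<and> elt_ideal_sum R2 I2 b = carrier R2)"
          using v unfolding vert by blast+
        have "a \<notin> I1" using F1 False va(1) nc1 by blast
        moreover have "b \<notin> I2" using F1 False va(1) nc2 by blast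
        ultimately show ?thesis using F1 False va(2) by blast
      qed
    qed
  qed
qed

end
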